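(* For every nonzero $Q(X,Y)\in M_{s,\ell}$, $\mathrm{wdeg}_{1,k-1}Q(X,Y)=\mathrm{wdeg}_{1,-1}\varphi(Q(X,Y))+sk$.
   Context: Let $\mathbb F_q$ be a finite field, $1\le k<n<q$, $\alpha_0,\dots,\alpha_{n-1}$ distinct nonzero elements of $\mathbb F_q$, $w_0,\dots,w_{n-1}$ nonzero elements of $\mathbb F_q$, and $r\in\mathbb F_q^n$ a word with $r_i=0$ for $i=0,\dots,k-1$; let $r_i'=r_i/w_i$. For positive integers $s\le\ell$, $M_{s,\ell}$ is the $\mathbb F_q[X]$-module of all $Q\in\mathbb F_q[X,Y]$ of $Y$-degree at most $\ell$ such that for each $i$, $Q(X+\alpha_i,Y+r_i')$ has no monomials of total degree less than $s$. Let $L(X)=\prod_{i=0}^{k-1}(X-\alpha_i)$ and $\varphi(Q)(X,Y)=L(X)^{-s}Q(X,L(X)Y)$ for $Q\in M_{s,\ell}$ (under the assumption on $r$, $\varphi(Q)\in\mathbb F_q[X,Y]$). For integers $u,v$, $\mathrm{wdeg}_{u,v}$ of a nonzero bivariate polynomial is the maximum of $ui+vj$ over its monomials $X^iY^j$. *)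

theory Defs
  imports "HOL-Computational_Algebra.Polynomial" "HOL-Library.Cardinality"
begin

text \<open>Bivariate polynomials in F[X,Y] are represented as elements of type
  ('a poly) poly: the outer variable is Y, the inner one is X. So
  coeff (coeff Q j) i is the coefficient of the monomial X^i Y^j.\<close>

definition bcoeff :: "'a::zero poly poly \<Rightarrow> nat \<Rightarrow> nat \<Rightarrow> 'a" where
  "bcoeff Q i j = coeff (coeff Q j) i"

definition shiftXY :: "'a::comm_ring_1 \<Rightarrow> 'a \<Rightarrow> 'a poly poly \<Rightarrow> 'a poly poly" where
  "shiftXY a b Q = map_poly (\<lambda>p. pcompose p [:a, 1:]) (pcompose Q [:[:b:], 1:])"

definition no_low_monomials :: "nat \<Rightarrow> 'a::zero poly poly \<Rightarrow> bool" where
  "no_low_monomials s Q \<longleftrightarrow> (\<forall>i j. i + j < s \<longrightarrow> bcoeff Q i j = 0)"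

definition M_sl :: "nat \<Rightarrow> nat \<Rightarrow> nat \<Rightarrow> (nat \<Rightarrow> 'a::field) \<Rightarrow> (nat \<Rightarrow> 'a) \<Rightarrow> (nat \<Rightarrow> 'a)
    \<Rightarrow> 'a poly poly set" where
  "M_sl s l n alpha w r =
     {Q. degree Q \<le> l \<and> (\<forall>i<n. no_low_monomials s (shiftXY (alpha i) (r i / w i) Q))}"

definition wdeg :: "int \<Rightarrow> int \<Rightarrow> 'a::zero poly poly \<Rightarrow> int" where
  "wdeg u v Q = Max {u * int i + v * int j | i j. bcoeff Q i j \<noteq> 0}"

definition Lpoly :: "nat \<Rightarrow> (nat \<Rightarrow> 'a::comm_ring_1) \<Rightarrow> 'a poly" where
  "Lpoly k alpha = (\<Prod>i<k. [:- alpha i, 1:])"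

text \<open>phi(Q)(X,Y) = L(X)^{-s} Q(X, L(X) Y): the coefficient of Y^j is
  Q_j(X) L(X)^j / L(X)^s (an exact division under the standing assumptions).\<close>
definition phi :: "nat \<Rightarrow> nat \<Rightarrow> (nat \<Rightarrow> 'a::field) \<Rightarrow> 'a poly poly \<Rightarrow> 'a poly poly" where
  "phi k s alpha Q = Poly (map (\<lambda>j. (coeff Q j * Lpoly k alpha ^ j) div (Lpoly k alpha ^ s))
                               [0..<Suc (degree Q)])"

end

theory Submission
  imports Defs
begin

lemma pcompose_pow: "pcompose (p ^ m) q = (pcompose p q) ^ m"
  by (induction m) (simp_all add: pcompose_mult pcompose_1)

lemma shift_dvd:
  fixes p :: "'a::field poly"
  assumes "\<forall>i<m. coeff (pcompose p [:a,1:]) i = 0"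
  shows "[:-a,1:]^m dvd p"
proof -
  have "monom 1 m dvd pcompose p [:a,1:]" using assms monom_1_dvd_iff' by blast
  then obtain g where g: "pcompose p [:a,1:] = monom 1 m * g" by (auto elim: dvdE)
  have e: "pcompose [:a,1:] [:-a,1:] = [:0,1:]" by (simp add: pcompose_pCons)
  have "p = pcompose (pcompose p [:a,1:]) [:-a,1:]"
    by (simp add: pcompose_assoc[symmetric] e)
  also have "\<dots> = [:-a,1:]^m * pcompose g [:-a,1:]"
    by (simp add: g pcompose_mult monom_altdef pcompose_pow pcompose_pCons)
  finally show ?thesis by (metis dvd_triv_left)
qed

lemma prod_dvd:
  fixes p :: "'a::field poly"
  assumes "finite A" "inj_on alpha A" "\<forall>i\<in>A. [:-alpha i,1:]^m dvd p"
  shows "(\<Prod>i\<in>A. [:-alpha i,1:])^m dvd p"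
proof (cases "p = 0")
  case True then show ?thesis by simp
next
  case False
  have "(\<Prod>i\<in>A. [:-alpha i,1:]^m) dvd p" using assms
  proof (induction A rule: finite_induct)
    case empty then show ?case by simp
  next
    case (insert a A)
    then have "(\<Prod>i\<in>A. [:-alpha i,1:]^m) dvd p" by (auto intro: inj_on_subset)
    then obtain q where q: "p = (\<Prod>i\<in>A. [:-alpha i,1:]^m) * q" by (auto elim: dvdE)
    have nz: "(\<Prod>i\<in>A. [:-alpha i,1:]^m) * q \<noteq> 0" using q False by simp
    have "poly (\<Prod>i\<in>A. [:-alpha i,1:]^m) (alpha a) \<noteq> 0"
      using insert.prems(1) insert.hyps by (auto simp: poly_prod)
    then have o0: "order (alpha a) (\<Prod>i\<in>A. [:-alpha i,1:]^m) = 0"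
      by (simp add: order_root)
    have "m \<le> order (alpha a) p" using insert.prems(2) False order_divides by blast
    then have "m \<le> order (alpha a) q" using order_mult[OF nz, of "alpha a"] o0 q by simp
    then have "[:-alpha a,1:]^m dvd q" using order_divides by blast
    then show ?case using q insert.hyps by (simp add: mult_dvd_mono)
  qed
  then show ?thesis by (simp add: prod_power_distrib)
qed

lemma wdeg_1:
  fixes Q :: "'a::zero poly poly"
  shows "wdeg 1 v Q = Max ((\<lambda>j. int (degree (coeff Q j)) + v * int j) ` {j. coeff Q j \<noteq> 0})"
proof -
  let ?S = "{1 * int i + v * int j | i j. bcoeff Q i j \<noteq> 0}"
  let ?J = "{j. coeff Q j \<noteq> 0}"
  have finJ: "finite ?J"
    by (rule finite_subset[of _ "{..degree Q}"]) (auto intro: le_degree)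
  have "?S \<subseteq> (\<lambda>(i,j). int i + v * int j) ` (\<Union>j\<in>{..degree Q}. {..degree (coeff Q j)} \<times> {j})"
  proof
    fix x assume "x \<in> ?S"
    then obtain i j where x: "x = int i + v * int j" and nz: "coeff (coeff Q j) i \<noteq> 0"
      by (auto simp: bcoeff_def)
    then have "coeff Q j \<noteq> 0" by auto
    then have "j \<le> degree Q" by (rule le_degree)
    moreover have "i \<le> degree (coeff Q j)" using nz by (rule le_degree)
    ultimately show "x \<in> (\<lambda>(i,j). int i + v * int j) ` (\<Union>j\<in>{..degree Q}. {..degree (coeff Q j)} \<times> {j})"
      using x by force
  qed
  then have finS: "finite ?S" by (rule finite_subset) auto
  show ?thesis unfolding wdeg_def
  proof (rule Max_eq_if[OF finS finite_imageI[OF finJ]])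
    show "\<forall>a\<in>?S. \<exists>b\<in>(\<lambda>j. int (degree (coeff Q j)) + v * int j) ` ?J. a \<le> b"
    proof
      fix x assume "x \<in> ?S"
      then obtain i j where x: "x = int i + v * int j" and nz: "coeff (coeff Q j) i \<noteq> 0"
        by (auto simp: bcoeff_def)
      have "i \<le> degree (coeff Q j)" using nz by (rule le_degree)
      moreover have "coeff Q j \<noteq> 0" using nz by auto
      ultimately show "\<exists>b\<in>(\<lambda>j. int (degree (coeff Q j)) + v * int j) ` ?J. x \<le> b"
        using x by force
    qed
    show "\<forall>b\<in>(\<lambda>j. int (degree (coeff Q j)) + v * int j) ` ?J. \<exists>a\<in>?S. b \<le> a"
    proof
      fix b assume "b \<in> (\<lambda>j. int (degree (coeff Q j)) + v * int j) ` ?J"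
      then obtain j where b: "b = int (degree (coeff Q j)) + v * int j" and nz: "coeff Q j \<noteq> 0"
        by auto
      have "bcoeff Q (degree (coeff Q j)) j \<noteq> 0" using nz by (simp add: bcoeff_def)
      then have "b \<in> ?S" using b by force
      then show "\<exists>a\<in>?S. b \<le> a" by blast
    qed
  qed
qed

theorem lemma12:
  fixes alpha w r :: "nat \<Rightarrow> 'a::{finite,field}"
    and n k s l :: nat
    and Q :: "'a poly poly"
  assumes "1 \<le> k" "k < n" "n < CARD('a)"
    and "inj_on alpha {..<n}" "\<forall>i<n. alpha i \<noteq> 0"
    and "\<forall>i<n. w i \<noteq> 0"
    and "\<forall>i<k. r i = 0"
    and "0 < s" "s \<le> l"
    and "Q \<in> M_sl s l n alpha w r" "Q \<noteq> 0"
  shows "wdeg 1 (int k - 1) Q = wdeg 1 (-1) (phi k s alpha Q) + int s * int k"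
proof -
  define L where "L = Lpoly k alpha"
  have L0: "L \<noteq> 0" by (simp add: L_def Lpoly_def)
  have degL: "degree L = k"
    by (simp add: L_def Lpoly_def degree_prod_eq_sum_degree)
  have injk: "inj_on alpha {..<k}" using assms(2,4) by (auto intro: inj_on_subset)
  have key: "\<exists>c. coeff Q j * L^j = L^s * c" for j
  proof (cases "s \<le> j")
    case True
    then have "coeff Q j * L^j = L^s * (coeff Q j * L^(j-s))"
      by (simp add: power_add[symmetric] algebra_simps)
    then show ?thesis by blast
  next
    case False
    have "\<forall>i\<in>{..<k}. [:-alpha i,1:]^(s-j) dvd coeff Q j"
    proof
      fix i assume i: "i \<in> {..<k}"
      then have "i < n" using assms(2) by simp
      then have nl: "no_low_monomials s (shiftXY (alpha i) (r i / w i) Q)"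
        using assms(10) by (simp add: M_sl_def)
      have ri: "r i / w i = 0" using assms(7) i by simp
      have sh: "shiftXY (alpha i) 0 Q = map_poly (\<lambda>p. pcompose p [:alpha i, 1:]) Q"
        by (simp add: shiftXY_def)
      show "[:-alpha i,1:]^(s-j) dvd coeff Q j"
      proof (rule shift_dvd, intro allI impI)
        fix t assume "t < s - j"
        then have "t + j < s" by simp
        then have "bcoeff (shiftXY (alpha i) 0 Q) t j = 0"
          using nl ri by (simp add: no_low_monomials_def)
        then show "coeff (pcompose (coeff Q j) [:alpha i, 1:]) t = 0"
          by (simp add: sh bcoeff_def coeff_map_poly)
      qed
    qed
    then have "(\<Prod>i\<in>{..<k}. [:-alpha i,1:])^(s-j) dvd coeff Q j"
      by (intro prod_dvd[OF _ injk]) auto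
    then obtain c where c: "coeff Q j = L^(s-j) * c"
      by (auto simp: L_def Lpoly_def elim: dvdE)
    have "coeff Q j * L^j = L^s * c" using False
      by (simp add: c power_add[symmetric] algebra_simps)
    then show ?thesis by blast
  qed
  define P where "P j = coeff Q j * L^j div L^s" for j
  have P: "coeff Q j * L^j = L^s * P j" for j
    using key[of j] L0 by (auto simp: P_def)
  have cphi: "coeff (phi k s alpha Q) j = P j" for j
  proof (cases "j \<le> degree Q")
    case True
    then show ?thesis
      by (simp add: phi_def P_def L_def nth_default_def del: upt_Suc)
  next
    case False
    then have "coeff Q j = 0" by (simp add: coeff_eq_0)
    then have "P j = 0" by (simp add: P_def)
    with False show ?thesis
      by (simp add: phi_def nth_default_def del: upt_Suc)
  qed
  have Pnz: "P j \<noteq> 0 \<longleftrightarrow> coeff Q j \<noteq> 0" for j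
    using P[of j] L0 by (metis mult_eq_0_iff power_eq_0_iff)
  have degP: "coeff Q j \<noteq> 0 \<Longrightarrow> int (degree (P j)) = int (degree (coeff Q j)) + int k * int j - int s * int k" for j
  proof -
    assume nz: "coeff Q j \<noteq> 0"
    have "degree (coeff Q j * L^j) = degree (L^s * P j)" by (simp add: P)
    then have "degree (coeff Q j) + k * j = k * s + degree (P j)"
      using nz L0 Pnz[of j] by (simp add: degree_mult_eq degree_power_eq degL mult.commute)
    then have "int (degree (coeff Q j) + k * j) = int (k * s + degree (P j))" by simp
    then show ?thesis by (simp add: algebra_simps)
  qed
  let ?J = "{j. coeff Q j \<noteq> 0}"
  let ?f = "\<lambda>j. int (degree (coeff Q j)) + (int k - 1) * int j"
  have finJ: "finite ?J"
    by (rule finite_subset[of _ "{..degree Q}"]) (auto intro: le_degree)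
  have "degree Q \<in> ?J" using assms(11) by simp
  then have neJ: "?J \<noteq> {}" by blast
  have "wdeg 1 (-1) (phi k s alpha Q) =
        Max ((\<lambda>j. int (degree (P j)) + (-1) * int j) ` {j. P j \<noteq> 0})"
    unfolding wdeg_1 cphi ..
  also have "\<dots> = Max ((\<lambda>x. x - int s * int k) ` (?f ` ?J))"
  proof -
    have e: "{j. P j \<noteq> 0} = ?J" using Pnz by blast
    show ?thesis unfolding e image_image
      by (intro arg_cong[where f=Max] image_cong refl) (simp add: degP algebra_simps)
  qed
  also have "\<dots> = Max (?f ` ?J) - int s * int k"
    using neJ by (intro mono_Max_commute[symmetric] finite_imageI finJ) (auto simp: mono_def)
  finally show ?thesis unfolding wdeg_1[of "int k - 1" Q] by simp
qed

end
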